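(* Under the standing assumptions below, let $\{\pi_k\}$ be the sequence generated by the trust-region method described in the context, and assume $\mathbb A^*_{\pi_k}>0$ for all $k$ (so that every ratio $r_k$ is well defined). Then (1) $\liminf_{k\to\infty}\mathbb A^*_{\pi_k}=0$; (2) $\lim_{k\to\infty}\eta(\pi_k)=\eta(\pi^* )$, where $\pi^*$ is an optimal solution of $\max_{\pi\in\Pi}\eta(\pi)$.
   Context: Consider an infinite-horizon discounted Markov decision process $(\mathcal S,\mathcal A,P,r,\rho_0,\gamma)$ with finite state space $\mathcal S$, finite action space $\mathcal A$, transition probabilities $P(s'|s,a)$, bounded reward function $r:\mathcal S\times\mathcal A\to\mathbb R$, initial-state distribution $\rho_0$ with $\rho_0(s)>0$ for all $s\in\mathcal S$, and discount factor $\gamma\in(0,1)$. A policy $\pi$ assigns to each state $s$ a probability distribution $\pi(\cdot|s)$ on $\mathcal A$; $\Pi$ denotes the set of all policies. The total expected reward is $\eta(\pi)=\mathbb E_\pi[\sum_{t=0}^\infty\gamma^t r(s_t,a_t)]$, where $s_0\sim\rho_0$, $a_t\sim\pi(\cdot|s_t)$, $s_{t+1}\sim P(\cdot|s_t,a_t)$. The unnormalized discounted visitation frequency is $\rho_\pi(s)=\sum_{t=0}^\infty\gamma^t\mathbb P(s_t=s\mid\pi)$. $Q_\pi(s,a)=\mathbb E_\pi[\sum_{l\ge0}\gamma^l r(s_l,a_l)\mid s_0=s,a_0=a]$, $V_\pi(s)=\mathbb E_\pi[\sum_{l\ge0}\gamma^l r(s_l,a_l)\mid s_0=s]$, and the advantage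 is $A_\pi(s,a)=Q_\pi(s,a)-V_\pi(s)$. The surrogate function is $L_\pi(\tilde\pi)=\eta(\pi)+\sum_s\rho_\pi(s)\sum_a\tilde\pi(a|s)A_\pi(s,a)$. The policy advantage of $\pi'$ with respect to $\pi$ is $\mathbb A_\pi(\pi')=\sum_s\rho_\pi(s)\sum_a\pi'(a|s)A_\pi(s,a)$, and $\mathbb A^*_\pi=\max_{\pi'\in\Pi}\mathbb A_\pi(\pi')$. The total variation distance is $D_{TV}(p\|q)=\frac12\sum_x|p(x)-q(x)|$. Trust-region method: fix constants $0<\beta_0<\beta_1<1$ and $0<\gamma_3<\gamma_2\le1<\gamma_1$, an initial policy $\pi_0$ and radius $\delta_0>0$. At iteration $k$, let $\tilde\pi_{k+1}$ be an optimal solution of $\max_{\pi\in\Pi}L_{\pi_k}(\pi)$ subject to $\sum_s\rho_{\pi_k}(s)D_{TV}(\pi_k(\cdot|s)\|\pi(\cdot|s))\le\delta_k$; compute $r_k=\frac{\eta(\tilde\pi_{k+1})-\eta(\pi_k)}{L_{\pi_k}(\tilde\pi_{k+1})-L_{\pi_k}(\pi_k)}$; set $\pi_{k+1}=\tilde\pi_{k+1}$ if $r_k\ge\beta_0$ and $\pi_{k+1}=\pi_k$ otherwise; set $\delta_{k+1}=\gamma_1\delta_k$ if $r_k\ge\beta_1$, $\delta_{k+1}=\gamma_2\delta_k$ if $r_k\in[\beta_0,\beta_1)$, and $\delta_{k+1}=\gamma_3\delta_k$ otherwise. *)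

theory Defs
  imports "HOL-Analysis.Analysis" "HOL-Library.Liminf_Limsup"
begin

text \<open>Finite MDP with states of type 's::finite and actions of type 'a::finite.
  P s a s' = transition probability P(s'|s,a); r s a = reward; gam = discount factor.
  A policy p s a = p(a|s).\<close>

definition is_stoch :: "('x::finite \<Rightarrow> real) \<Rightarrow> bool" where
  "is_stoch p \<longleftrightarrow> (\<forall>x. p x \<ge> 0) \<and> (\<Sum>x\<in>UNIV. p x) = 1"

definition is_policy :: "('s::finite \<Rightarrow> 'a::finite \<Rightarrow> real) \<Rightarrow> bool" where
  "is_policy p \<longleftrightarrow> (\<forall>s. is_stoch (p s))"

fun stdist :: "('s::finite \<Rightarrow> 'a::finite \<Rightarrow> 's \<Rightarrow> real) \<Rightarrow> ('s \<Rightarrow> 'a \<Rightarrow> real)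
    \<Rightarrow> ('s \<Rightarrow> real) \<Rightarrow> nat \<Rightarrow> 's \<Rightarrow> real" where
  "stdist P p mu 0 = mu"
| "stdist P p mu (Suc t) =
     (\<lambda>s'. \<Sum>s\<in>UNIV. \<Sum>a\<in>UNIV. stdist P p mu t s * p s a * P s a s')"

definition value_from :: "('s::finite \<Rightarrow> 'a::finite \<Rightarrow> 's \<Rightarrow> real) \<Rightarrow> ('s \<Rightarrow> 'a \<Rightarrow> real)
    \<Rightarrow> real \<Rightarrow> ('s \<Rightarrow> 'a \<Rightarrow> real) \<Rightarrow> ('s \<Rightarrow> real) \<Rightarrow> real" where
  "value_from P r gam p mu =
     (\<Sum>t. gam ^ t * (\<Sum>s\<in>UNIV. stdist P p mu t s * (\<Sum>a\<in>UNIV. p s a * r s a)))"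

definition eta :: "('s::finite \<Rightarrow> 'a::finite \<Rightarrow> 's \<Rightarrow> real) \<Rightarrow> ('s \<Rightarrow> 'a \<Rightarrow> real)
    \<Rightarrow> real \<Rightarrow> ('s \<Rightarrow> real) \<Rightarrow> ('s \<Rightarrow> 'a \<Rightarrow> real) \<Rightarrow> real" where
  "eta P r gam rho0 p = value_from P r gam p rho0"

definition visit :: "('s::finite \<Rightarrow> 'a::finite \<Rightarrow> 's \<Rightarrow> real) \<Rightarrow> real \<Rightarrow> ('s \<Rightarrow> real)
    \<Rightarrow> ('s \<Rightarrow> 'a \<Rightarrow> real) \<Rightarrow> 's \<Rightarrow> real" where
  "visit P gam rho0 p s = (\<Sum>t. gam ^ t * stdist P p rho0 t s)"

definition Vfun :: "('s::finite \<Rightarrow> 'a::finite \<Rightarrow> 's \<Rightarrow> real) \<Rightarrow> ('s \<Rightarrow> 'a \<Rightarrow> real)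
    \<Rightarrow> real \<Rightarrow> ('s \<Rightarrow> 'a \<Rightarrow> real) \<Rightarrow> 's \<Rightarrow> real" where
  "Vfun P r gam p s = value_from P r gam p (\<lambda>s'. if s' = s then 1 else 0)"

text \<open>Q_pi(s,a): reward r(s,a) at time 0, then s_1 ~ P(.|s,a) and actions follow p
  (sum over l >= 1 of gam^l E[r(s_l,a_l)] = gam * value from the distribution of s_1).\<close>
definition Qfun :: "('s::finite \<Rightarrow> 'a::finite \<Rightarrow> 's \<Rightarrow> real) \<Rightarrow> ('s \<Rightarrow> 'a \<Rightarrow> real)
    \<Rightarrow> real \<Rightarrow> ('s \<Rightarrow> 'a \<Rightarrow> real) \<Rightarrow> 's \<Rightarrow> 'a \<Rightarrow> real" where
  "Qfun P r gam p s a = r s a + gam * value_from P r gam p (P s a)"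

definition Adv :: "('s::finite \<Rightarrow> 'a::finite \<Rightarrow> 's \<Rightarrow> real) \<Rightarrow> ('s \<Rightarrow> 'a \<Rightarrow> real)
    \<Rightarrow> real \<Rightarrow> ('s \<Rightarrow> 'a \<Rightarrow> real) \<Rightarrow> 's \<Rightarrow> 'a \<Rightarrow> real" where
  "Adv P r gam p s a = Qfun P r gam p s a - Vfun P r gam p s"

definition surrogate :: "('s::finite \<Rightarrow> 'a::finite \<Rightarrow> 's \<Rightarrow> real) \<Rightarrow> ('s \<Rightarrow> 'a \<Rightarrow> real)
    \<Rightarrow> real \<Rightarrow> ('s \<Rightarrow> real) \<Rightarrow> ('s \<Rightarrow> 'a \<Rightarrow> real) \<Rightarrow> ('s \<Rightarrow> 'a \<Rightarrow> real) \<Rightarrow> real" where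
  "surrogate P r gam rho0 p q1 = eta P r gam rho0 p +
     (\<Sum>s\<in>UNIV. visit P gam rho0 p s * (\<Sum>a\<in>UNIV. q1 s a * Adv P r gam p s a))"

definition pol_adv :: "('s::finite \<Rightarrow> 'a::finite \<Rightarrow> 's \<Rightarrow> real) \<Rightarrow> ('s \<Rightarrow> 'a \<Rightarrow> real)
    \<Rightarrow> real \<Rightarrow> ('s \<Rightarrow> real) \<Rightarrow> ('s \<Rightarrow> 'a \<Rightarrow> real) \<Rightarrow> ('s \<Rightarrow> 'a \<Rightarrow> real) \<Rightarrow> real" where
  "pol_adv P r gam rho0 p q1 =
     (\<Sum>s\<in>UNIV. visit P gam rho0 p s * (\<Sum>a\<in>UNIV. q1 s a * Adv P r gam p s a))"

text \<open>A*_pi = max over all policies of A_pi(q1) (the maximum is attained; written as Sup).\<close>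
definition Astar :: "('s::finite \<Rightarrow> 'a::finite \<Rightarrow> 's \<Rightarrow> real) \<Rightarrow> ('s \<Rightarrow> 'a \<Rightarrow> real)
    \<Rightarrow> real \<Rightarrow> ('s \<Rightarrow> real) \<Rightarrow> ('s \<Rightarrow> 'a \<Rightarrow> real) \<Rightarrow> real" where
  "Astar P r gam rho0 p = (SUP q1\<in>{q1. is_policy q1}. pol_adv P r gam rho0 p q1)"

definition dtv :: "('x::finite \<Rightarrow> real) \<Rightarrow> ('x \<Rightarrow> real) \<Rightarrow> real" where
  "dtv p q = (1/2) * (\<Sum>x\<in>UNIV. \<bar>p x - q x\<bar>)"

definition tr_feasible :: "('s::finite \<Rightarrow> 'a::finite \<Rightarrow> 's \<Rightarrow> real) \<Rightarrow> real \<Rightarrow> ('s \<Rightarrow> real)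
    \<Rightarrow> ('s \<Rightarrow> 'a \<Rightarrow> real) \<Rightarrow> real \<Rightarrow> ('s \<Rightarrow> 'a \<Rightarrow> real) \<Rightarrow> bool" where
  "tr_feasible P gam rho0 p delta q1 \<longleftrightarrow> is_policy q1 \<and>
     (\<Sum>s\<in>UNIV. visit P gam rho0 p s * dtv (p s) (q1 s)) \<le> delta"

definition tr_optimal :: "('s::finite \<Rightarrow> 'a::finite \<Rightarrow> 's \<Rightarrow> real) \<Rightarrow> ('s \<Rightarrow> 'a \<Rightarrow> real)
    \<Rightarrow> real \<Rightarrow> ('s \<Rightarrow> real) \<Rightarrow> ('s \<Rightarrow> 'a \<Rightarrow> real) \<Rightarrow> real \<Rightarrow> ('s \<Rightarrow> 'a \<Rightarrow> real) \<Rightarrow> bool" where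
  "tr_optimal P r gam rho0 p delta q1 \<longleftrightarrow> tr_feasible P gam rho0 p delta q1 \<and>
     (\<forall>q. tr_feasible P gam rho0 p delta q \<longrightarrow>
          surrogate P r gam rho0 p q \<le> surrogate P r gam rho0 p q1)"

definition tr_ratio :: "('s::finite \<Rightarrow> 'a::finite \<Rightarrow> 's \<Rightarrow> real) \<Rightarrow> ('s \<Rightarrow> 'a \<Rightarrow> real)
    \<Rightarrow> real \<Rightarrow> ('s \<Rightarrow> real) \<Rightarrow> ('s \<Rightarrow> 'a \<Rightarrow> real) \<Rightarrow> ('s \<Rightarrow> 'a \<Rightarrow> real) \<Rightarrow> real" where
  "tr_ratio P r gam rho0 p q1 =
     (eta P r gam rho0 q1 - eta P r gam rho0 p) /
     (surrogate P r gam rho0 p q1 - surrogate P r gam rho0 p p)"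

end

theory Submission
  imports Defs
begin


lemma stoch_nonneg: "is_stoch p \<Longrightarrow> p x \<ge> 0" by (simp add: is_stoch_def)
lemma stoch_sum: "is_stoch p \<Longrightarrow> (\<Sum>x\<in>UNIV. p x) = 1" by (simp add: is_stoch_def)
lemma stoch_le1: "is_stoch p \<Longrightarrow> p x \<le> 1"
proof -
  assume h: "is_stoch p"
  have "p x \<le> (\<Sum>x\<in>UNIV. p x)" by (rule member_le_sum) (auto simp: stoch_nonneg[OF h])
  thus ?thesis using stoch_sum[OF h] by simp
qed

lemma sum_swap3:
  fixes f :: "'s::finite \<Rightarrow> 'a::finite \<Rightarrow> 't::finite \<Rightarrow> real"
  shows "(\<Sum>u\<in>UNIV. \<Sum>s\<in>UNIV. \<Sum>a\<in>UNIV. f s a u) = (\<Sum>s\<in>UNIV. \<Sum>a\<in>UNIV. \<Sum>u\<in>UNIV. f s a u)"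
proof -
  have "(\<Sum>u\<in>UNIV. \<Sum>s\<in>UNIV. \<Sum>a\<in>UNIV. f s a u) = (\<Sum>s\<in>UNIV. \<Sum>u\<in>UNIV. \<Sum>a\<in>UNIV. f s a u)" by (rule sum.swap)
  also have "\<dots> = (\<Sum>s\<in>UNIV. \<Sum>a\<in>UNIV. \<Sum>u\<in>UNIV. f s a u)" by (rule sum.cong[OF refl], rule sum.swap)
  finally show ?thesis .
qed

lemma stdist_stoch:
  assumes trans: "\<And>s a. is_stoch (P s a)" and p: "is_policy p" and mu: "is_stoch mu"
  shows "is_stoch (stdist P p mu t)"
proof (induction t)
  case 0 then show ?case using mu by simp
next
  case (Suc t)
  let ?x = "stdist P p mu t"
  have nn: "\<forall>s'. stdist P p mu (Suc t) s' \<ge> 0"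
    using Suc p trans by (auto intro!: sum_nonneg mult_nonneg_nonneg simp: is_stoch_def is_policy_def)
  have "(\<Sum>s'\<in>UNIV. stdist P p mu (Suc t) s') = (\<Sum>s'\<in>UNIV. \<Sum>s\<in>UNIV. \<Sum>a\<in>UNIV. ?x s * p s a * P s a s')" by simp
  also have "\<dots> = (\<Sum>s\<in>UNIV. \<Sum>a\<in>UNIV. \<Sum>s'\<in>UNIV. ?x s * p s a * P s a s')" by (rule sum_swap3)
  also have "\<dots> = (\<Sum>s\<in>UNIV. \<Sum>a\<in>UNIV. ?x s * p s a * (\<Sum>s'\<in>UNIV. P s a s'))" by (simp add: sum_distrib_left)
  also have "\<dots> = (\<Sum>s\<in>UNIV. ?x s * (\<Sum>a\<in>UNIV. p s a))" using trans by (simp add: stoch_sum sum_distrib_left)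
  also have "\<dots> = (\<Sum>s\<in>UNIV. ?x s)" using p by (simp add: is_policy_def stoch_sum)
  also have "\<dots> = 1" using Suc by (simp add: stoch_sum)
  finally show ?case using nn by (simp add: is_stoch_def)
qed

lemma stdist_shift: "stdist P p mu (Suc t) = stdist P p (stdist P p mu (Suc 0)) t"
  by (induction t) simp_all

lemma stdist_linear:
  "stdist P p mu t s' = (\<Sum>u\<in>UNIV. mu u * stdist P p (\<lambda>x. if x = u then 1 else 0) t s')"
proof (induction t arbitrary: s')
  case 0 then show ?case by (simp add: if_distrib cong: if_cong)
next
  case (Suc t)
  have "stdist P p mu (Suc t) s' = (\<Sum>s\<in>UNIV. \<Sum>a\<in>UNIV. (\<Sum>u\<in>UNIV. mu u * stdist P p (\<lambda>x. if x = u then 1 else 0) t s) * p s a * P s a s')"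
    using Suc by simp
  also have "\<dots> = (\<Sum>s\<in>UNIV. \<Sum>a\<in>UNIV. \<Sum>u\<in>UNIV. mu u * (stdist P p (\<lambda>x. if x = u then 1 else 0) t s * p s a * P s a s'))"
    by (simp add: sum_distrib_right mult.assoc)
  also have "\<dots> = (\<Sum>u\<in>UNIV. \<Sum>s\<in>UNIV. \<Sum>a\<in>UNIV. mu u * (stdist P p (\<lambda>x. if x = u then 1 else 0) t s * p s a * P s a s'))"
    by (rule sum_swap3[symmetric])
  also have "\<dots> = (\<Sum>u\<in>UNIV. mu u * stdist P p (\<lambda>x. if x = u then 1 else 0) (Suc t) s')"
    by (simp add: sum_distrib_left mult.assoc)
  finally show ?case .
qed

lemma geo_summable:
  fixes f :: "nat \<Rightarrow> real"
  assumes "0 \<le> g" "g < 1" "\<And>t. \<bar>f t\<bar> \<le> B"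
  shows "summable (\<lambda>t. g^t * f t)"
proof (rule summable_comparison_test'[of "\<lambda>t. B * g^t" 0])
  show "summable (\<lambda>t. B * g^t)" using assms by (intro summable_mult summable_geometric) simp
  fix t show "norm (g^t * f t) \<le> B * g^t"
    using mult_right_mono[OF assms(3)[of t], of "g^t"] assms by (simp add: abs_mult mult.commute)
qed

lemma geo_bound:
  fixes f :: "nat \<Rightarrow> real"
  assumes "0 \<le> g" "g < 1" "\<And>t. \<bar>f t\<bar> \<le> B"
  shows "\<bar>\<Sum>t. g^t * f t\<bar> \<le> B / (1 - g)"
proof -
  have s1: "summable (\<lambda>t. \<bar>g^t * f t\<bar>)"
    using geo_summable[of g "\<lambda>t. \<bar>f t\<bar>" B] assms by (simp add: abs_mult)
  have s2: "summable (\<lambda>t. B * g^t)" using assms by (intro summable_mult summable_geometric) simp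
  have "\<bar>\<Sum>t. g^t * f t\<bar> \<le> (\<Sum>t. \<bar>g^t * f t\<bar>)" by (rule summable_rabs[OF s1])
  also have "\<dots> \<le> (\<Sum>t. B * g^t)"
  proof (rule suminf_le[OF _ s1 s2])
    fix n show "\<bar>g^n * f n\<bar> \<le> B * g^n"
      using mult_right_mono[OF assms(3)[of n], of "g^n"] assms by (simp add: abs_mult mult.commute)
  qed
  also have "\<dots> = B / (1 - g)" using assms by (simp add: suminf_mult suminf_geometric)
  finally show ?thesis .
qed

definition "dlt u = (\<lambda>x. if x = u then (1::real) else 0)"

lemma Vfun_dlt: "Vfun P r gam p u = value_from P r gam p (dlt u)"
  by (simp add: Vfun_def dlt_def)

lemma sum_dlt: fixes f :: "'x::finite \<Rightarrow> real" shows "(\<Sum>x\<in>UNIV. dlt u x * f x) = f u"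
proof -
  have "\<And>x. dlt u x * f x = (if x = u then f x else 0)" by (simp add: dlt_def)
  thus ?thesis by (simp add: sum.delta)
qed

lemma dlt_stoch: "is_stoch (dlt u)"
  by (simp add: is_stoch_def dlt_def)

definition Rp :: "('s::finite \<Rightarrow> 'a::finite \<Rightarrow> real) \<Rightarrow> ('s \<Rightarrow> 'a \<Rightarrow> real) \<Rightarrow> 's \<Rightarrow> real" where
  "Rp r p s = (\<Sum>a\<in>UNIV. p s a * r s a)"

locale mdp =
  fixes P :: "'s::finite \<Rightarrow> 'a::finite \<Rightarrow> 's \<Rightarrow> real" and r :: "'s \<Rightarrow> 'a \<Rightarrow> real"
    and rho0 :: "'s \<Rightarrow> real" and gam :: real
  assumes trans: "\<And>s a. is_stoch (P s a)" and init: "is_stoch rho0"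
    and init_pos: "\<And>s. rho0 s > 0" and gpos: "0 < gam" and glt: "gam < 1"
begin

definition "Rmax = (\<Sum>s\<in>UNIV. \<Sum>a\<in>UNIV. \<bar>r s a\<bar>)"

lemma Rmax_ge: "\<bar>r s a\<bar> \<le> Rmax"
proof -
  have "\<bar>r s a\<bar> \<le> (\<Sum>a\<in>UNIV. \<bar>r s a\<bar>)" by (rule member_le_sum) auto
  also have "\<dots> \<le> Rmax" unfolding Rmax_def by (rule member_le_sum) (auto intro: sum_nonneg)
  finally show ?thesis .
qed

lemma Rmax_nonneg: "0 \<le> Rmax" using Rmax_ge[of undefined undefined] by simp

lemma stoch_avg_bound:
  fixes f :: "'x::finite \<Rightarrow> real"
  assumes "is_stoch x" "\<And>s. \<bar>f s\<bar> \<le> B"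
  shows "\<bar>\<Sum>s\<in>UNIV. x s * f s\<bar> \<le> B"
proof -
  have "\<bar>\<Sum>s\<in>UNIV. x s * f s\<bar> \<le> (\<Sum>s\<in>UNIV. \<bar>x s * f s\<bar>)" by (rule sum_abs)
  also have "\<dots> \<le> (\<Sum>s\<in>UNIV. x s * B)"
    using assms by (intro sum_mono) (simp add: abs_mult stoch_nonneg mult_left_mono)
  also have "\<dots> = B" using assms by (simp add: sum_distrib_right[symmetric] stoch_sum)
  finally show ?thesis .
qed

lemma Rp_bound: "is_policy p \<Longrightarrow> \<bar>Rp r p s\<bar> \<le> Rmax"
  unfolding Rp_def is_policy_def by (rule stoch_avg_bound) (auto simp: Rmax_ge)

lemma value_from_Rp: "value_from P r gam p mu = (\<Sum>t. gam^t * (\<Sum>s\<in>UNIV. stdist P p mu t s * Rp r p s))"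
  by (simp add: value_from_def Rp_def)

lemma term_bound:
  assumes "is_policy p" "is_stoch mu"
  shows "\<bar>\<Sum>s\<in>UNIV. stdist P p mu t s * Rp r p s\<bar> \<le> Rmax"
  by (rule stoch_avg_bound[OF stdist_stoch[OF trans assms]]) (rule Rp_bound[OF assms(1)])

lemma value_summable:
  assumes "is_policy p" "is_stoch mu"
  shows "summable (\<lambda>t. gam^t * (\<Sum>s\<in>UNIV. stdist P p mu t s * Rp r p s))"
  by (rule geo_summable[OF _ glt term_bound[OF assms]]) (use gpos in simp)

lemma value_bound:
  assumes "is_policy p" "is_stoch mu"
  shows "\<bar>value_from P r gam p mu\<bar> \<le> Rmax / (1 - gam)"
  unfolding value_from_Rp by (rule geo_bound[OF _ glt term_bound[OF assms]]) (use gpos in simp)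

lemma value_linear:
  assumes p: "is_policy p" and mu: "is_stoch mu"
  shows "value_from P r gam p mu = (\<Sum>u\<in>UNIV. mu u * Vfun P r gam p u)"
proof -
  have "value_from P r gam p mu =
     (\<Sum>t. \<Sum>u\<in>UNIV. mu u * (gam^t * (\<Sum>s\<in>UNIV. stdist P p (dlt u) t s * Rp r p s)))"
    unfolding value_from_Rp
  proof (intro suminf_cong)
    fix t
    have "(\<Sum>s\<in>UNIV. stdist P p mu t s * Rp r p s) =
        (\<Sum>s\<in>UNIV. \<Sum>u\<in>UNIV. mu u * (stdist P p (dlt u) t s * Rp r p s))"
      by (subst stdist_linear) (simp add: dlt_def sum_distrib_right mult.assoc)
    also have "\<dots> = (\<Sum>u\<in>UNIV. \<Sum>s\<in>UNIV. mu u * (stdist P p (dlt u) t s * Rp r p s))"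
      by (rule sum.swap)
    finally show "gam^t * (\<Sum>s\<in>UNIV. stdist P p mu t s * Rp r p s) =
       (\<Sum>u\<in>UNIV. mu u * (gam^t * (\<Sum>s\<in>UNIV. stdist P p (dlt u) t s * Rp r p s)))"
      by (simp add: sum_distrib_left mult_ac)
  qed
  also have "\<dots> = (\<Sum>u\<in>UNIV. \<Sum>t. mu u * (gam^t * (\<Sum>s\<in>UNIV. stdist P p (dlt u) t s * Rp r p s)))"
    by (rule suminf_sum) (intro summable_mult value_summable[OF p dlt_stoch])
  also have "\<dots> = (\<Sum>u\<in>UNIV. mu u * Vfun P r gam p u)"
    by (simp add: suminf_mult value_summable[OF p dlt_stoch] Vfun_dlt value_from_Rp)
  finally show ?thesis .
qed


lemma value_step:
  assumes p: "is_policy p" and mu: "is_stoch mu"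
  shows "value_from P r gam p mu = (\<Sum>s\<in>UNIV. mu s * Rp r p s) + gam * value_from P r gam p (stdist P p mu (Suc 0))"
proof -
  let ?F = "\<lambda>t. gam^t * (\<Sum>s\<in>UNIV. stdist P p mu t s * Rp r p s)"
  have sm: "summable ?F" by (rule value_summable[OF p mu])
  have "(\<Sum>n. ?F (Suc n)) = value_from P r gam p mu - ?F 0"
    unfolding value_from_Rp by (rule suminf_split_head[OF sm])
  moreover have "(\<Sum>n. ?F (Suc n)) = gam * value_from P r gam p (stdist P p mu (Suc 0))"
  proof -
    have "(\<Sum>n. ?F (Suc n)) = (\<Sum>n. gam * (gam^n * (\<Sum>s\<in>UNIV. stdist P p (stdist P p mu (Suc 0)) n s * Rp r p s)))"
      by (subst stdist_shift) (simp add: mult.assoc)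
    also have "\<dots> = gam * value_from P r gam p (stdist P p mu (Suc 0))"
      unfolding value_from_Rp
      by (rule suminf_mult[OF value_summable[OF p stdist_stoch[OF trans p mu]]])
    finally show ?thesis .
  qed
  ultimately show ?thesis by simp
qed

lemma bellman:
  assumes p: "is_policy p"
  shows "Vfun P r gam p s = Rp r p s + gam * (\<Sum>a\<in>UNIV. p s a * (\<Sum>u\<in>UNIV. P s a u * Vfun P r gam p u))"
proof -
  have st: "is_stoch (stdist P p (dlt s) (Suc 0))" by (rule stdist_stoch[OF trans p dlt_stoch])
  have e: "stdist P p (dlt s) (Suc 0) u = (\<Sum>a\<in>UNIV. p s a * P s a u)" for u
  proof -
    have "stdist P p (dlt s) (Suc 0) u = (\<Sum>s'\<in>UNIV. dlt s s' * (\<Sum>a\<in>UNIV. p s' a * P s' a u))"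
      by (simp add: sum_distrib_left mult.assoc)
    also have "\<dots> = (\<Sum>a\<in>UNIV. p s a * P s a u)" by (rule sum_dlt)
    finally show ?thesis .
  qed
  have "Vfun P r gam p s = Rp r p s + gam * (\<Sum>u\<in>UNIV. stdist P p (dlt s) (Suc 0) u * Vfun P r gam p u)"
    unfolding Vfun_dlt[of P r gam p s] value_step[OF p dlt_stoch] value_linear[OF p st]
    by (simp add: sum_dlt)
  also have "\<dots> = Rp r p s + gam * (\<Sum>a\<in>UNIV. p s a * (\<Sum>u\<in>UNIV. P s a u * Vfun P r gam p u))"
  proof -
    have "(\<Sum>u\<in>UNIV. stdist P p (dlt s) (Suc 0) u * Vfun P r gam p u) =
        (\<Sum>u\<in>UNIV. \<Sum>a\<in>UNIV. p s a * (P s a u * Vfun P r gam p u))"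
      unfolding e by (simp add: sum_distrib_right mult.assoc)
    also have "\<dots> = (\<Sum>a\<in>UNIV. \<Sum>u\<in>UNIV. p s a * (P s a u * Vfun P r gam p u))"
      by (rule sum.swap)
    also have "\<dots> = (\<Sum>a\<in>UNIV. p s a * (\<Sum>u\<in>UNIV. P s a u * Vfun P r gam p u))"
      by (simp add: sum_distrib_left)
    finally show ?thesis by simp
  qed
  finally show ?thesis .
qed

lemma Qfun_eq:
  assumes p: "is_policy p"
  shows "Qfun P r gam p s a = r s a + gam * (\<Sum>u\<in>UNIV. P s a u * Vfun P r gam p u)"
  unfolding Qfun_def value_linear[OF p trans[of s a]] ..

lemma adv_avg_zero:
  assumes p: "is_policy p"
  shows "(\<Sum>a\<in>UNIV. p s a * Adv P r gam p s a) = 0"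
proof -
  have ps: "(\<Sum>a\<in>UNIV. p s a) = 1" using p by (simp add: is_policy_def stoch_sum)
  have "(\<Sum>a\<in>UNIV. p s a * Adv P r gam p s a) =
     (\<Sum>a\<in>UNIV. p s a * r s a) + gam * (\<Sum>a\<in>UNIV. p s a * (\<Sum>u\<in>UNIV. P s a u * Vfun P r gam p u))
       - (\<Sum>a\<in>UNIV. p s a) * Vfun P r gam p s"
    unfolding Adv_def Qfun_eq[OF p]
    by (simp add: algebra_simps sum.distrib sum_subtractf sum_distrib_left sum_distrib_right)
  also have "\<dots> = 0" using bellman[OF p, of s] ps by (simp add: Rp_def)
  finally show ?thesis .
qed

lemma stdist_abs_le1:
  assumes p: "is_policy p" and mu: "is_stoch mu"
  shows "\<bar>stdist P p mu t s\<bar> \<le> 1"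
  using stdist_stoch[OF trans p mu] by (simp add: stoch_nonneg stoch_le1)

lemma visit_summable:
  assumes p: "is_policy p"
  shows "summable (\<lambda>t. gam^t * stdist P p rho0 t s)"
  by (rule geo_summable[OF _ glt stdist_abs_le1[OF p init]]) (use gpos in simp)

lemma visit_nonneg:
  assumes p: "is_policy p"
  shows "visit P gam rho0 p s \<ge> 0"
  unfolding visit_def
  by (rule suminf_nonneg[OF visit_summable[OF p]])
     (use gpos stdist_stoch[OF trans p init] in \<open>simp add: stoch_nonneg\<close>)

lemma visit_ge_rho0:
  assumes p: "is_policy p"
  shows "visit P gam rho0 p s \<ge> rho0 s"
proof -
  have "(\<Sum>t\<in>{0}. gam^t * stdist P p rho0 t s) \<le> visit P gam rho0 p s"
    unfolding visit_def
    by (rule sum_le_suminf[OF visit_summable[OF p]])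
       (use gpos stdist_stoch[OF trans p init] in \<open>simp_all add: stoch_nonneg\<close>)
  thus ?thesis by simp
qed

lemma suminf_sum_fin:
  fixes f :: "'i::finite \<Rightarrow> nat \<Rightarrow> real"
  assumes "\<And>i. summable (f i)"
  shows "(\<Sum>n. \<Sum>i\<in>UNIV. c i * f i n) = (\<Sum>i\<in>UNIV. c i * suminf (f i))"
  using assms by (simp add: suminf_sum summable_mult suminf_mult)

lemma visit_sum:
  assumes p: "is_policy p"
  shows "(\<Sum>s\<in>UNIV. visit P gam rho0 p s) = 1 / (1 - gam)"
proof -
  have "(\<Sum>s\<in>UNIV. visit P gam rho0 p s) = (\<Sum>t. \<Sum>s\<in>UNIV. 1 * (gam^t * stdist P p rho0 t s))"
    unfolding visit_def by (subst suminf_sum_fin) (use visit_summable[OF p] in auto)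
  also have "\<dots> = (\<Sum>t. gam^t)"
    using stdist_stoch[OF trans p init] by (simp add: sum_distrib_left[symmetric] stoch_sum)
  also have "\<dots> = 1 / (1 - gam)" using gpos glt by (simp add: suminf_geometric)
  finally show ?thesis .
qed

lemma visit_le:
  assumes p: "is_policy p"
  shows "visit P gam rho0 p s \<le> 1 / (1 - gam)"
proof -
  have "visit P gam rho0 p s \<le> (\<Sum>s\<in>UNIV. visit P gam rho0 p s)"
    by (rule member_le_sum) (auto simp: visit_nonneg[OF p])
  thus ?thesis using visit_sum[OF p] by simp
qed

lemma eta_visit:
  assumes p: "is_policy p"
  shows "eta P r gam rho0 p = (\<Sum>s\<in>UNIV. visit P gam rho0 p s * Rp r p s)"
proof -
  have "eta P r gam rho0 p = (\<Sum>t. \<Sum>s\<in>UNIV. Rp r p s * (gam^t * stdist P p rho0 t s))"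
    unfolding eta_def value_from_Rp by (simp add: sum_distrib_left mult_ac)
  also have "\<dots> = (\<Sum>s\<in>UNIV. Rp r p s * visit P gam rho0 p s)"
    unfolding visit_def by (rule suminf_sum_fin) (rule visit_summable[OF p])
  finally show ?thesis by (simp add: mult.commute)
qed

lemma visit_eq:
  assumes p: "is_policy p"
  shows "visit P gam rho0 p u = rho0 u + gam * (\<Sum>s\<in>UNIV. \<Sum>a\<in>UNIV. visit P gam rho0 p s * p s a * P s a u)"
proof -
  let ?F = "\<lambda>t. gam^t * stdist P p rho0 t u"
  have "(\<Sum>n. ?F (Suc n)) = visit P gam rho0 p u - ?F 0"
    unfolding visit_def by (rule suminf_split_head[OF visit_summable[OF p]])
  moreover have "(\<Sum>n. ?F (Suc n)) = gam * (\<Sum>s\<in>UNIV. \<Sum>a\<in>UNIV. visit P gam rho0 p s * p s a * P s a u)"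
  proof -
    have "(\<Sum>n. ?F (Suc n)) = (\<Sum>n. \<Sum>s\<in>UNIV. (gam * (\<Sum>a\<in>UNIV. p s a * P s a u)) * (gam^n * stdist P p rho0 n s))"
      by (simp add: sum_distrib_left sum_distrib_right mult_ac)
    also have "\<dots> = (\<Sum>s\<in>UNIV. (gam * (\<Sum>a\<in>UNIV. p s a * P s a u)) * visit P gam rho0 p s)"
      unfolding visit_def by (rule suminf_sum_fin) (rule visit_summable[OF p])
    also have "\<dots> = gam * (\<Sum>s\<in>UNIV. \<Sum>a\<in>UNIV. visit P gam rho0 p s * p s a * P s a u)"
      by (simp add: sum_distrib_left sum_distrib_right mult_ac)
    finally show ?thesis .
  qed
  ultimately show ?thesis by simp
qed

lemma V_bound: "is_policy p \<Longrightarrow> \<bar>Vfun P r gam p s\<bar> \<le> Rmax / (1 - gam)"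
  unfolding Vfun_dlt by (rule value_bound[OF _ dlt_stoch])

lemma Q_bound:
  assumes p: "is_policy p"
  shows "\<bar>Qfun P r gam p s a\<bar> \<le> Rmax / (1 - gam)"
proof -
  have h: "\<bar>\<Sum>u\<in>UNIV. P s a u * Vfun P r gam p u\<bar> \<le> Rmax / (1 - gam)"
    by (rule stoch_avg_bound[OF trans V_bound[OF p]])
  have "\<bar>Qfun P r gam p s a\<bar> \<le> \<bar>r s a\<bar> + gam * \<bar>\<Sum>u\<in>UNIV. P s a u * Vfun P r gam p u\<bar>"
    unfolding Qfun_eq[OF p] using gpos by (simp add: abs_mult abs_triangle_ineq[THEN order_trans])
  also have "\<dots> \<le> Rmax + gam * (Rmax / (1 - gam))"
    using Rmax_ge[of s a] h gpos by (intro add_mono mult_left_mono) auto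
  also have "\<dots> = Rmax / (1 - gam)" using glt by (simp add: field_simps)
  finally show ?thesis .
qed

definition "Amax = 2 * Rmax / (1 - gam)"

lemma Amax_nonneg: "0 \<le> Amax" unfolding Amax_def using Rmax_nonneg glt by simp

lemma Adv_bound:
  assumes p: "is_policy p"
  shows "\<bar>Adv P r gam p s a\<bar> \<le> Amax"
  using Q_bound[OF p, of s a] V_bound[OF p, of s] unfolding Adv_def Amax_def by simp

lemma eta_V:
  assumes p: "is_policy p"
  shows "eta P r gam rho0 p = (\<Sum>s\<in>UNIV. rho0 s * Vfun P r gam p s)"
  unfolding eta_def by (rule value_linear[OF p init])

lemma pdl:
  assumes p: "is_policy p" and q: "is_policy q"
  shows "eta P r gam rho0 q - eta P r gam rho0 p =
     (\<Sum>s\<in>UNIV. visit P gam rho0 q s * (\<Sum>a\<in>UNIV. q s a * Adv P r gam p s a))"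
proof -
  define V where "V = Vfun P r gam p"
  define d where "d = visit P gam rho0 q"
  define W where "W s = (\<Sum>a\<in>UNIV. q s a * (\<Sum>u\<in>UNIV. P s a u * V u))" for s
  have qs: "(\<Sum>a\<in>UNIV. q s a) = 1" for s using q by (simp add: is_policy_def stoch_sum)
  have g: "(\<Sum>a\<in>UNIV. q s a * Adv P r gam p s a) = Rp r q s + gam * W s - V s" for s
  proof -
    have "(\<Sum>a\<in>UNIV. q s a * Adv P r gam p s a) =
      (\<Sum>a\<in>UNIV. q s a * r s a) + gam * W s - (\<Sum>a\<in>UNIV. q s a) * V s"
      unfolding Adv_def Qfun_eq[OF p] W_def V_def
      by (simp add: algebra_simps sum.distrib sum_subtractf sum_distrib_left sum_distrib_right)
    thus ?thesis using qs by (simp add: Rp_def)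
  qed
  have dW: "(\<Sum>s\<in>UNIV. d s * W s) = (\<Sum>u\<in>UNIV. (\<Sum>s\<in>UNIV. \<Sum>a\<in>UNIV. d s * q s a * P s a u) * V u)"
  proof -
    have "(\<Sum>s\<in>UNIV. d s * W s) = (\<Sum>s\<in>UNIV. \<Sum>a\<in>UNIV. \<Sum>u\<in>UNIV. d s * q s a * P s a u * V u)"
      unfolding W_def by (simp add: sum_distrib_left mult.assoc)
    also have "\<dots> = (\<Sum>u\<in>UNIV. \<Sum>s\<in>UNIV. \<Sum>a\<in>UNIV. d s * q s a * P s a u * V u)"
      by (rule sum_swap3[symmetric])
    also have "\<dots> = (\<Sum>u\<in>UNIV. (\<Sum>s\<in>UNIV. \<Sum>a\<in>UNIV. d s * q s a * P s a u) * V u)"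
      by (simp add: sum_distrib_right)
    finally show ?thesis .
  qed
  have dd: "gam * (\<Sum>s\<in>UNIV. \<Sum>a\<in>UNIV. d s * q s a * P s a u) = d u - rho0 u" for u
    using visit_eq[OF q, of u] unfolding d_def by simp
  have "(\<Sum>s\<in>UNIV. d s * (\<Sum>a\<in>UNIV. q s a * Adv P r gam p s a)) =
     (\<Sum>s\<in>UNIV. d s * Rp r q s) + gam * (\<Sum>s\<in>UNIV. d s * W s) - (\<Sum>s\<in>UNIV. d s * V s)"
    unfolding g by (simp add: algebra_simps sum.distrib sum_subtractf sum_distrib_left)
  also have "gam * (\<Sum>s\<in>UNIV. d s * W s) = (\<Sum>u\<in>UNIV. (d u - rho0 u) * V u)"
    unfolding dW sum_distrib_left by (simp add: mult.assoc[symmetric] dd)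
  also have "(\<Sum>s\<in>UNIV. d s * Rp r q s) = eta P r gam rho0 q"
    unfolding d_def by (rule eta_visit[OF q, symmetric])
  finally show ?thesis
    unfolding d_def[symmetric] eta_V[OF p] V_def[symmetric]
    by (simp add: left_diff_distrib sum_subtractf)
qed

lemma surrogate_eq: "surrogate P r gam rho0 p q = eta P r gam rho0 p + pol_adv P r gam rho0 p q"
  unfolding surrogate_def pol_adv_def ..

lemma pol_adv_self: "is_policy p \<Longrightarrow> pol_adv P r gam rho0 p p = 0"
  unfolding pol_adv_def by (simp add: adv_avg_zero)

definition "mix t p q = (\<lambda>s a. (1 - t) * p s a + t * q s a)"

lemma mix_policy:
  assumes "is_policy p" "is_policy q" "0 \<le> t" "t \<le> 1"
  shows "is_policy (mix t p q)"
  using assms unfolding is_policy_def is_stoch_def mix_def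
  by (auto simp: sum.distrib sum_distrib_left[symmetric] intro!: add_nonneg_nonneg mult_nonneg_nonneg)

lemma pol_adv_mix:
  assumes p: "is_policy p"
  shows "pol_adv P r gam rho0 p (mix t p q) = t * pol_adv P r gam rho0 p q"
proof -
  have h: "(\<Sum>a\<in>UNIV. mix t p q s a * Adv P r gam p s a) = t * (\<Sum>a\<in>UNIV. q s a * Adv P r gam p s a)" for s
  proof -
    have "(\<Sum>a\<in>UNIV. mix t p q s a * Adv P r gam p s a) =
      (1 - t) * (\<Sum>a\<in>UNIV. p s a * Adv P r gam p s a) + t * (\<Sum>a\<in>UNIV. q s a * Adv P r gam p s a)"
      unfolding mix_def by (simp add: sum.distrib sum_distrib_left distrib_right mult.assoc)
    thus ?thesis using adv_avg_zero[OF p, of s] by simp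
  qed
  show ?thesis unfolding pol_adv_def h by (simp add: sum_distrib_left mult_ac)
qed

lemma dtv_mix:
  assumes "0 \<le> t"
  shows "dtv (p s) (mix t p q s) = t * dtv (p s) (q s)"
proof -
  have "\<bar>p s a - mix t p q s a\<bar> = t * \<bar>p s a - q s a\<bar>" for a
  proof -
    have "p s a - mix t p q s a = t * (p s a - q s a)" unfolding mix_def by (simp add: algebra_simps)
    thus ?thesis using assms by (simp add: abs_mult)
  qed
  thus ?thesis unfolding dtv_def by (simp add: sum_distrib_left)
qed

lemma dtv_nonneg: "dtv x y \<ge> 0" unfolding dtv_def by (simp add: sum_nonneg)

lemma dtv_le1:
  assumes "is_stoch x" "is_stoch y"
  shows "dtv x y \<le> 1"
proof -
  have "(\<Sum>a\<in>UNIV. \<bar>x a - y a\<bar>) \<le> (\<Sum>a\<in>UNIV. x a + y a)"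
  proof (rule sum_mono)
    fix a
    have "x a \<ge> 0" "y a \<ge> 0" using assms by (auto simp: stoch_nonneg)
    thus "\<bar>x a - y a\<bar> \<le> x a + y a" by linarith
  qed
  also have "\<dots> = 2" using assms by (simp add: sum.distrib stoch_sum)
  finally show ?thesis unfolding dtv_def by simp
qed

lemma weighted_bound:
  fixes w f :: "'x::finite \<Rightarrow> real"
  assumes "\<And>s. w s \<ge> 0" "\<And>s. \<bar>f s\<bar> \<le> B"
  shows "\<bar>\<Sum>s\<in>UNIV. w s * f s\<bar> \<le> (\<Sum>s\<in>UNIV. w s) * B"
proof -
  have "\<bar>\<Sum>s\<in>UNIV. w s * f s\<bar> \<le> (\<Sum>s\<in>UNIV. \<bar>w s * f s\<bar>)" by (rule sum_abs)
  also have "\<dots> \<le> (\<Sum>s\<in>UNIV. w s * B)"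
    using assms by (intro sum_mono) (simp add: abs_mult mult_left_mono)
  finally show ?thesis by (simp add: sum_distrib_right)
qed

lemma pol_adv_bound:
  assumes p: "is_policy p" and q: "is_policy q"
  shows "\<bar>pol_adv P r gam rho0 p q\<bar> \<le> Amax / (1 - gam)"
proof -
  have "\<bar>pol_adv P r gam rho0 p q\<bar> \<le> (\<Sum>s\<in>UNIV. visit P gam rho0 p s) * Amax"
    unfolding pol_adv_def
  proof (rule weighted_bound)
    fix s show "0 \<le> visit P gam rho0 p s" by (rule visit_nonneg[OF p])
    show "\<bar>\<Sum>a\<in>UNIV. q s a * Adv P r gam p s a\<bar> \<le> Amax"
      using q by (intro stoch_avg_bound Adv_bound[OF p]) (simp add: is_policy_def)
  qed
  thus ?thesis using visit_sum[OF p] by simp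
qed

lemma exists_policy: "\<exists>q::'s \<Rightarrow> 'a \<Rightarrow> real. is_policy q"
proof -
  have "is_policy (\<lambda>(s::'s) (a::'a). 1 / real CARD('a))"
    unfolding is_policy_def is_stoch_def by simp
  thus ?thesis by blast
qed

lemma Astar_bdd:
  assumes p: "is_policy p"
  shows "bdd_above ((\<lambda>q. pol_adv P r gam rho0 p q) ` {q. is_policy q})"
  using pol_adv_bound[OF p] by (intro bdd_aboveI[of _ "Amax / (1 - gam)"]) (auto simp: abs_le_iff)

lemma Astar_ge:
  assumes p: "is_policy p" and q: "is_policy q"
  shows "pol_adv P r gam rho0 p q \<le> Astar P r gam rho0 p"
  unfolding Astar_def by (rule cSUP_upper[OF _ Astar_bdd[OF p]]) (use q in simp)

lemma Astar_approx:
  assumes p: "is_policy p" and A: "y < Astar P r gam rho0 p"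
  shows "\<exists>q. is_policy q \<and> y < pol_adv P r gam rho0 p q"
proof -
  have ne: "{q::'s \<Rightarrow> 'a \<Rightarrow> real. is_policy q} \<noteq> {}" using exists_policy by auto
  show ?thesis using A unfolding Astar_def less_cSUP_iff[OF ne Astar_bdd[OF p]] by auto
qed

lemma denom_bound:
  assumes p: "is_policy p" and dpos: "0 < dl" and opt: "tr_optimal P r gam rho0 p dl q1"
    and Apos: "Astar P r gam rho0 p > 0"
  shows "surrogate P r gam rho0 p q1 - surrogate P r gam rho0 p p \<ge> min 1 (dl * (1 - gam)) * (Astar P r gam rho0 p / 2)"
proof -
  obtain q where q: "is_policy q" and qA: "Astar P r gam rho0 p / 2 < pol_adv P r gam rho0 p q"
    using Astar_approx[OF p, of "Astar P r gam rho0 p / 2"] Apos by auto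
  define t where "t = min 1 (dl * (1 - gam))"
  have t0: "0 < t" and t1: "t \<le> 1" using dpos glt by (auto simp: t_def)
  have mp: "is_policy (mix t p q)" by (rule mix_policy[OF p q]) (use t0 t1 in auto)
  have "(\<Sum>s\<in>UNIV. visit P gam rho0 p s * dtv (p s) (mix t p q s)) =
     t * (\<Sum>s\<in>UNIV. visit P gam rho0 p s * dtv (p s) (q s))"
    using t0 by (simp add: dtv_mix sum_distrib_left mult_ac)
  also have "\<dots> \<le> t * (\<Sum>s\<in>UNIV. visit P gam rho0 p s * 1)"
    using p q t0 by (intro mult_left_mono sum_mono mult_left_mono dtv_le1)
       (auto simp: is_policy_def visit_nonneg)
  also have "\<dots> = t / (1 - gam)" using visit_sum[OF p] by simp
  also have "\<dots> \<le> dl" using glt by (simp add: t_def divide_le_eq min_def)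
  finally have feas: "tr_feasible P gam rho0 p dl (mix t p q)" using mp by (simp add: tr_feasible_def)
  have "surrogate P r gam rho0 p (mix t p q) \<le> surrogate P r gam rho0 p q1"
    using opt feas by (simp add: tr_optimal_def)
  hence "t * pol_adv P r gam rho0 p q \<le> surrogate P r gam rho0 p q1 - surrogate P r gam rho0 p p"
    by (simp add: surrogate_eq pol_adv_mix[OF p] pol_adv_self[OF p])
  moreover have "t * (Astar P r gam rho0 p / 2) \<le> t * pol_adv P r gam rho0 p q"
    using qA t0 by simp
  ultimately show ?thesis unfolding t_def by linarith
qed

definition "rmin = Min (range rho0)"

lemma rmin_pos: "0 < rmin" unfolding rmin_def using init_pos by (subst Min_gr_iff) auto
lemma rmin_le: "rmin \<le> rho0 s" unfolding rmin_def by (rule Min_le) auto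

lemma subopt:
  assumes p: "is_policy p" and ps: "is_policy ps"
  shows "eta P r gam rho0 ps - eta P r gam rho0 p \<le> Astar P r gam rho0 p / ((1 - gam) * rmin)"
proof -
  let ?A = "Adv P r gam p"
  define M where "M s = Max (range (?A s))" for s
  define am where "am s = (SOME a. ?A s a = M s)" for s
  have amM: "?A s (am s) = M s" for s
  proof -
    have "M s \<in> range (?A s)" unfolding M_def by (rule Max_in) auto
    then obtain a where "?A s a = M s" by auto
    thus ?thesis unfolding am_def by (rule someI)
  qed
  have leM: "?A s a \<le> M s" for s a unfolding M_def by (rule Max_ge) auto
  have avgM: "(\<Sum>a\<in>UNIV. q s a * ?A s a) \<le> M s" if q: "is_policy q" for q s
  proof -
    have "(\<Sum>a\<in>UNIV. q s a * ?A s a) \<le> (\<Sum>a\<in>UNIV. q s a * M s)"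
      using q by (intro sum_mono mult_left_mono leM) (simp add: is_policy_def stoch_nonneg)
    also have "\<dots> = M s" using q by (simp add: sum_distrib_right[symmetric] is_policy_def stoch_sum)
    finally show ?thesis .
  qed
  have M0: "0 \<le> M s" for s using avgM[OF p, of s] adv_avg_zero[OF p, of s] by simp
  define qg where "qg s = dlt (am s)" for s
  have qgp: "is_policy qg" unfolding is_policy_def qg_def by (simp add: dlt_stoch)
  have "pol_adv P r gam rho0 p qg = (\<Sum>s\<in>UNIV. visit P gam rho0 p s * M s)"
    unfolding pol_adv_def qg_def by (simp add: sum_dlt amM)
  hence AM: "(\<Sum>s\<in>UNIV. visit P gam rho0 p s * M s) \<le> Astar P r gam rho0 p"
    using Astar_ge[OF p qgp] by simp
  have c: "(1 - gam) * rmin > 0" using glt rmin_pos by simp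
  have "eta P r gam rho0 ps - eta P r gam rho0 p =
     (\<Sum>s\<in>UNIV. visit P gam rho0 ps s * (\<Sum>a\<in>UNIV. ps s a * ?A s a))" by (rule pdl[OF p ps])
  also have "\<dots> \<le> (\<Sum>s\<in>UNIV. (visit P gam rho0 p s / ((1 - gam) * rmin)) * M s)"
  proof (rule sum_mono)
    fix s
    have "visit P gam rho0 ps s \<le> 1 / (1 - gam)" by (rule visit_le[OF ps])
    also have "\<dots> \<le> visit P gam rho0 p s / ((1 - gam) * rmin)"
    proof -
      have "rmin \<le> visit P gam rho0 p s" using rmin_le[of s] visit_ge_rho0[OF p, of s] by simp
      hence "1 \<le> visit P gam rho0 p s / rmin" using rmin_pos by (simp add: le_divide_eq)
      hence "1 / (1 - gam) \<le> (visit P gam rho0 p s / rmin) / (1 - gam)"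
        using glt by (intro divide_right_mono) auto
      thus ?thesis by (simp add: divide_divide_eq_left mult.commute)
    qed
    finally have v: "visit P gam rho0 ps s \<le> visit P gam rho0 p s / ((1 - gam) * rmin)" .
    show "visit P gam rho0 ps s * (\<Sum>a\<in>UNIV. ps s a * ?A s a) \<le> (visit P gam rho0 p s / ((1 - gam) * rmin)) * M s"
      using v M0[of s] avgM[OF ps, of s] visit_nonneg[OF ps, of s]
      by (meson mult_left_mono mult_right_mono order_trans)
  qed
  also have "\<dots> = (\<Sum>s\<in>UNIV. visit P gam rho0 p s * M s) / ((1 - gam) * rmin)"
    by (simp add: sum_divide_distrib)
  also have "\<dots> \<le> Astar P r gam rho0 p / ((1 - gam) * rmin)"
    using AM c by (simp add: divide_right_mono)
  finally show ?thesis .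
qed

lemma err_bound:
  assumes p: "is_policy p" and q: "is_policy q"
    and feas: "(\<Sum>s\<in>UNIV. visit P gam rho0 p s * dtv (p s) (q s)) \<le> dl"
  shows "\<bar>eta P r gam rho0 q - surrogate P r gam rho0 p q\<bar> \<le> (4 * gam * Amax / ((1 - gam) * rmin)) * dl^2"
proof -
  define dp where "dp = visit P gam rho0 p"
  define dq where "dq = visit P gam rho0 q"
  define e where "e u = dq u - dp u" for u
  define E where "E = (\<Sum>u\<in>UNIV. \<bar>e u\<bar>)"
  define D where "D s = dtv (p s) (q s)" for s
  define A where "A = Adv P r gam p"
  define g where "g s = (\<Sum>a\<in>UNIV. q s a * A s a)" for s
  have dp0: "dp s \<ge> 0" for s unfolding dp_def by (rule visit_nonneg[OF p])
  have D0: "D s \<ge> 0" for s unfolding D_def by (rule dtv_nonneg)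
  have feas': "(\<Sum>s\<in>UNIV. dp s * D s) \<le> dl" using feas unfolding dp_def D_def .
  have dl0: "0 \<le> dl" using feas' dp0 D0 sum_nonneg[of UNIV "\<lambda>s. dp s * D s"] by force
  have Ds: "D s \<le> dl / rmin" for s
  proof -
    have "dp s * D s \<le> (\<Sum>s\<in>UNIV. dp s * D s)" by (rule member_le_sum) (auto simp: dp0 D0)
    moreover have "rmin * D s \<le> dp s * D s"
      using rmin_le[of s] visit_ge_rho0[OF p, of s] D0[of s] unfolding dp_def
      by (intro mult_right_mono) auto
    ultimately have "rmin * D s \<le> dl" using feas' by linarith
    thus ?thesis using rmin_pos by (simp add: pos_le_divide_eq mult.commute)
  qed
  have gb: "\<bar>g s\<bar> \<le> 2 * Amax * D s" for s
  proof -
    have "g s = (\<Sum>a\<in>UNIV. (q s a - p s a) * A s a)"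
      unfolding g_def A_def using adv_avg_zero[OF p, of s] by (simp add: left_diff_distrib sum_subtractf)
    also have "\<bar>\<dots>\<bar> \<le> (\<Sum>a\<in>UNIV. \<bar>q s a - p s a\<bar> * Amax)"
      by (rule order_trans[OF sum_abs], rule sum_mono)
         (simp add: abs_mult A_def Adv_bound[OF p] mult_left_mono)
    also have "\<dots> = 2 * Amax * D s"
      unfolding D_def dtv_def by (simp add: sum_distrib_right[symmetric] abs_minus_commute)
    finally show ?thesis .
  qed
  have gb2: "\<bar>g s\<bar> \<le> 2 * Amax * (dl / rmin)" for s
  proof -
    have "2 * Amax * D s \<le> 2 * Amax * (dl / rmin)"
      using Amax_nonneg by (intro mult_left_mono Ds) auto
    thus ?thesis using gb[of s] by linarith
  qed
  define X where "X s a = e s * q s a + dp s * (q s a - p s a)" for s a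
  have e_eq: "e u = gam * (\<Sum>s\<in>UNIV. \<Sum>a\<in>UNIV. X s a * P s a u)" for u
  proof -
    have "(\<Sum>s\<in>UNIV. \<Sum>a\<in>UNIV. X s a * P s a u) =
      (\<Sum>s\<in>UNIV. \<Sum>a\<in>UNIV. dq s * q s a * P s a u - dp s * p s a * P s a u)"
      unfolding X_def e_def by (simp add: algebra_simps)
    also have "\<dots> = (\<Sum>s\<in>UNIV. \<Sum>a\<in>UNIV. dq s * q s a * P s a u) - (\<Sum>s\<in>UNIV. \<Sum>a\<in>UNIV. dp s * p s a * P s a u)"
      by (simp add: sum_subtractf)
    finally show ?thesis
      using visit_eq[OF p, of u] visit_eq[OF q, of u] unfolding e_def dp_def dq_def
      by (simp add: right_diff_distrib)
  qed
  have Xb: "(\<Sum>a\<in>UNIV. \<bar>X s a\<bar>) \<le> \<bar>e s\<bar> + 2 * (dp s * D s)" for s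
  proof -
    have "(\<Sum>a\<in>UNIV. \<bar>X s a\<bar>) \<le> (\<Sum>a\<in>UNIV. \<bar>e s\<bar> * q s a + dp s * \<bar>q s a - p s a\<bar>)"
    proof (rule sum_mono)
      fix a
      have "q s a \<ge> 0" using q by (simp add: is_policy_def stoch_nonneg)
      thus "\<bar>X s a\<bar> \<le> \<bar>e s\<bar> * q s a + dp s * \<bar>q s a - p s a\<bar>"
      proof -
        have "\<bar>X s a\<bar> \<le> \<bar>e s * q s a\<bar> + \<bar>dp s * (q s a - p s a)\<bar>"
          unfolding X_def by (rule abs_triangle_ineq)
        thus ?thesis using dp0[of s] \<open>q s a \<ge> 0\<close> by (simp add: abs_mult)
      qed
    qed
    also have "\<dots> = \<bar>e s\<bar> * (\<Sum>a\<in>UNIV. q s a) + dp s * (\<Sum>a\<in>UNIV. \<bar>q s a - p s a\<bar>)"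
      by (simp add: sum.distrib sum_distrib_left)
    also have "\<dots> = \<bar>e s\<bar> + 2 * (dp s * D s)"
      using q unfolding D_def dtv_def by (simp add: is_policy_def stoch_sum abs_minus_commute)
    finally show ?thesis .
  qed
  have "E \<le> (\<Sum>u\<in>UNIV. gam * (\<Sum>s\<in>UNIV. \<Sum>a\<in>UNIV. \<bar>X s a\<bar> * P s a u))"
    unfolding E_def
  proof (rule sum_mono)
    fix u
    have "\<bar>\<Sum>s\<in>UNIV. \<Sum>a\<in>UNIV. X s a * P s a u\<bar> \<le> (\<Sum>s\<in>UNIV. \<Sum>a\<in>UNIV. \<bar>X s a * P s a u\<bar>)"
      by (rule order_trans[OF sum_abs], rule sum_mono, rule sum_abs)
    also have "\<dots> = (\<Sum>s\<in>UNIV. \<Sum>a\<in>UNIV. \<bar>X s a\<bar> * P s a u)"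
      using trans by (simp add: abs_mult stoch_nonneg)
    finally show "\<bar>e u\<bar> \<le> gam * (\<Sum>s\<in>UNIV. \<Sum>a\<in>UNIV. \<bar>X s a\<bar> * P s a u)"
      unfolding e_eq[of u] using gpos by (simp add: abs_mult)
  qed
  also have "\<dots> = gam * (\<Sum>s\<in>UNIV. \<Sum>a\<in>UNIV. \<Sum>u\<in>UNIV. \<bar>X s a\<bar> * P s a u)"
    using sum_swap3[of "\<lambda>s a u. \<bar>X s a\<bar> * P s a u"] by (simp add: sum_distrib_left[symmetric])
  also have "\<dots> = gam * (\<Sum>s\<in>UNIV. \<Sum>a\<in>UNIV. \<bar>X s a\<bar>)"
    using trans by (simp add: sum_distrib_left[symmetric] stoch_sum)
  also have "\<dots> \<le> gam * (\<Sum>s\<in>UNIV. \<bar>e s\<bar> + 2 * (dp s * D s))"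
    using gpos by (intro mult_left_mono sum_mono Xb) auto
  also have "\<dots> = gam * (E + 2 * (\<Sum>s\<in>UNIV. dp s * D s))"
    unfolding E_def by (simp add: sum.distrib sum_distrib_left)
  also have "\<dots> \<le> gam * (E + 2 * dl)"
    using gpos feas' by (intro mult_left_mono) auto
  finally have "E \<le> gam * (E + 2 * dl)" .
  hence "E * (1 - gam) \<le> 2 * gam * dl" by (simp add: algebra_simps)
  hence Eb: "E \<le> 2 * gam * dl / (1 - gam)"
    using glt by (simp add: pos_le_divide_eq)
  have E0: "E \<ge> 0" unfolding E_def by (simp add: sum_nonneg)
  have "eta P r gam rho0 q - surrogate P r gam rho0 p q = (\<Sum>s\<in>UNIV. e s * g s)"
    using pdl[OF p q] unfolding surrogate_eq pol_adv_def e_def g_def A_def dp_def dq_def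
    by (simp add: left_diff_distrib sum_subtractf)
  also have "\<bar>\<dots>\<bar> \<le> (\<Sum>s\<in>UNIV. \<bar>e s\<bar> * (2 * Amax * (dl / rmin)))"
    by (rule order_trans[OF sum_abs], rule sum_mono) (simp only: abs_mult, rule mult_left_mono[OF gb2], simp)
  also have "\<dots> = E * (2 * Amax * (dl / rmin))" unfolding E_def by (rule sum_distrib_right[symmetric])
  also have "\<dots> \<le> (2 * gam * dl / (1 - gam)) * (2 * Amax * (dl / rmin))"
    using Eb Amax_nonneg dl0 rmin_pos by (intro mult_right_mono) auto
  also have "\<dots> = (4 * gam * Amax / ((1 - gam) * rmin)) * dl^2"
    using glt rmin_pos by (simp add: power2_eq_square field_simps)
  finally show ?thesis .
qed

lemma tr_main:
  fixes beta0 beta1 g1 g2 g3 :: real and pol pt :: "nat \<Rightarrow> 's \<Rightarrow> 'a \<Rightarrow> real" and delta :: "nat \<Rightarrow> real"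
  assumes betas: "0 < beta0" "beta0 < beta1" "beta1 < 1"
    and gs: "0 < g3" "g3 < g2" "g2 \<le> 1" "1 < g1"
    and pol0: "is_policy (pol 0)"
    and delta0: "delta 0 > 0"
    and subprob: "\<And>k. tr_optimal P r gam rho0 (pol k) (delta k) (pt (Suc k))"
    and accept: "\<And>k. pol (Suc k) =
        (if tr_ratio P r gam rho0 (pol k) (pt (Suc k)) \<ge> beta0 then pt (Suc k) else pol k)"
    and radius: "\<And>k. delta (Suc k) =
        (if tr_ratio P r gam rho0 (pol k) (pt (Suc k)) \<ge> beta1 then g1 * delta k
         else if tr_ratio P r gam rho0 (pol k) (pt (Suc k)) \<ge> beta0 then g2 * delta k
         else g3 * delta k)"
    and Apos: "\<And>k. Astar P r gam rho0 (pol k) > 0"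
  shows "liminf (\<lambda>k. ereal (Astar P r gam rho0 (pol k))) = 0 \<and>
         (\<forall>pistar. is_policy pistar \<and>
            (\<forall>p. is_policy p \<longrightarrow> eta P r gam rho0 p \<le> eta P r gam rho0 pistar) \<longrightarrow>
            (\<lambda>k. eta P r gam rho0 (pol k)) \<longlonglongrightarrow> eta P r gam rho0 pistar)"
proof -
  define rt where "rt k = tr_ratio P r gam rho0 (pol k) (pt (Suc k))" for k
  define et where "et k = eta P r gam rho0 (pol k)" for k
  define A where "A k = Astar P r gam rho0 (pol k)" for k
  define den where "den k = surrogate P r gam rho0 (pol k) (pt (Suc k)) - surrogate P r gam rho0 (pol k) (pol k)" for k
  define C where "C = 4 * gam * Amax / ((1 - gam) * rmin)"
  have C0: "C \<ge> 0" using gpos glt Amax_nonneg rmin_pos by (simp add: C_def)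
  have ptp: "is_policy (pt (Suc k))" for k using subprob[of k] by (simp add: tr_optimal_def tr_feasible_def)
  have polp: "is_policy (pol k)" for k
  proof (induction k)
    case 0 then show ?case by (rule pol0)
  next
    case (Suc k) then show ?case using ptp[of k] by (simp add: accept[of k])
  qed
  have gd: "delta (Suc k) \<ge> g3 * delta k" if "delta k > 0" for k
  proof -
    have "g3 * delta k \<le> g1 * delta k" "g3 * delta k \<le> g2 * delta k"
      using that gs by (simp_all add: mult_right_mono)
    thus ?thesis by (simp add: radius[of k])
  qed
  have dpos: "delta k > 0" for k
  proof (induction k)
    case 0 then show ?case by (rule delta0)
  next
    case (Suc k)
    have "0 < g3 * delta k" using Suc gs by simp
    thus ?case using gd[OF Suc] by linarith
  qed
  have den_lb: "den k \<ge> min 1 (delta k * (1 - gam)) * (A k / 2)" for k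
    unfolding den_def A_def by (rule denom_bound[OF polp dpos subprob Apos])
  have den_pos: "den k > 0" for k
  proof -
    have "0 < min 1 (delta k * (1 - gam)) * (A k / 2)"
      using dpos[of k] glt Apos[of k] by (simp add: A_def)
    thus ?thesis using den_lb[of k] by linarith
  qed
  have num: "eta P r gam rho0 (pt (Suc k)) - et k = rt k * den k" for k
    unfolding rt_def tr_ratio_def et_def using den_pos[of k] by (simp add: den_def)
  have surr_self: "surrogate P r gam rho0 (pol k) (pol k) = et k" for k
    by (simp add: surrogate_eq pol_adv_self[OF polp] et_def)
  have step: "et (Suc k) = (if rt k \<ge> beta0 then eta P r gam rho0 (pt (Suc k)) else et k)" for k
    using accept[of k] by (simp add: et_def rt_def)
  have acc_inc: "et (Suc k) - et k \<ge> beta0 * den k" if "rt k \<ge> beta0" for k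
  proof -
    have "et (Suc k) - et k = rt k * den k" using step[of k] that num[of k] by simp
    moreover have "beta0 * den k \<le> rt k * den k" using that den_pos[of k] by (simp add: mult_right_mono)
    ultimately show ?thesis by simp
  qed
  have monoS: "et k \<le> et (Suc k)" for k
  proof (cases "rt k \<ge> beta0")
    case True
    have "0 \<le> beta0 * den k" using betas den_pos[of k] by simp
    thus ?thesis using acc_inc[OF True] by linarith
  next
    case False thus ?thesis using step[of k] by simp
  qed
  have inc: "incseq et" by (rule incseq_SucI) (rule monoS)
  have bnd: "\<bar>et k\<bar> \<le> Rmax / (1 - gam)" for k
    unfolding et_def eta_def by (rule value_bound[OF polp init])
  have err: "\<bar>eta P r gam rho0 (pt (Suc k)) - surrogate P r gam rho0 (pol k) (pt (Suc k))\<bar> \<le> C * (delta k)^2" for k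
    unfolding C_def
    by (rule err_bound[OF polp ptp]) (use subprob[of k] in \<open>simp add: tr_optimal_def tr_feasible_def\<close>)
  have rt_lb: "rt k \<ge> 1 - C * (delta k)^2 / den k" for k
  proof -
    have e1: "eta P r gam rho0 (pt (Suc k)) - et k \<ge> den k - C * (delta k)^2"
      using err[of k] surr_self[of k] unfolding den_def by (simp add: abs_le_iff)
    have "1 - C * (delta k)^2 / den k = (den k - C * (delta k)^2) / den k"
      using den_pos[of k] by (simp add: field_simps)
    also have "\<dots> \<le> (eta P r gam rho0 (pt (Suc k)) - et k) / den k"
      using e1 den_pos[of k] by (simp add: divide_right_mono)
    also have "\<dots> = rt k" using num[of k] den_pos[of k] by simp
    finally show ?thesis .
  qed
  have nonconv: "\<not> (\<exists>\<epsilon>>0. \<exists>K. \<forall>k\<ge>K. \<epsilon> \<le> A k)"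
  proof
    assume "\<exists>\<epsilon>>0. \<exists>K. \<forall>k\<ge>K. \<epsilon> \<le> A k"
    then obtain \<epsilon> K where eps: "\<epsilon> > 0" and AK: "\<And>k. k \<ge> K \<Longrightarrow> \<epsilon> \<le> A k" by auto
    define ds where "ds = min (1 / (1 - gam)) ((1 - beta1) * (1 - gam) * \<epsilon> / (2 * C + 1))"
    have ds0: "ds > 0" using glt betas eps C0 by (simp add: ds_def)
    have big: "rt k \<ge> beta1" if kK: "k \<ge> K" and dk: "delta k \<le> ds" for k
    proof -
      define d where "d = delta k"
      have d0: "d > 0" using dpos[of k] by (simp add: d_def)
      have "d \<le> 1 / (1 - gam)" using dk by (simp add: d_def ds_def)
      hence d1: "d * (1 - gam) \<le> 1" using glt by (simp add: le_divide_eq)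
      have d2: "d \<le> (1 - beta1) * (1 - gam) * \<epsilon> / (2 * C + 1)" using dk by (simp add: d_def ds_def)
      have dl: "den k \<ge> d * (1 - gam) * (\<epsilon> / 2)"
      proof -
        have "d * (1 - gam) * (\<epsilon> / 2) \<le> d * (1 - gam) * (A k / 2)"
          using AK[OF kK] d0 glt by (intro mult_left_mono) auto
        thus ?thesis using den_lb[of k] d1 unfolding d_def by (simp add: min_def)
      qed
      have pos: "0 < d * (1 - gam) * (\<epsilon> / 2)" using d0 glt eps by simp
      have "C * d^2 / den k \<le> C * d^2 / (d * (1 - gam) * (\<epsilon> / 2))"
        using C0 pos dl by (intro divide_left_mono) auto
      also have "\<dots> = 2 * C * d / ((1 - gam) * \<epsilon>)"
        using d0 glt eps by (simp add: power2_eq_square field_simps)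
      also have "\<dots> \<le> 1 - beta1"
      proof -
        have "d * (2 * C + 1) \<le> (1 - beta1) * (1 - gam) * \<epsilon>" using d2 C0 by (simp add: le_divide_eq)
        moreover have "2 * C * d \<le> d * (2 * C + 1)" using d0 by (simp add: algebra_simps)
        ultimately have "2 * C * d \<le> (1 - beta1) * ((1 - gam) * \<epsilon>)" by (simp add: mult.assoc)
        thus ?thesis using glt eps by (simp add: divide_le_eq)
      qed
      finally have "C * (delta k)^2 / den k \<le> 1 - beta1" by (simp add: d_def)
      thus ?thesis using rt_lb[of k] by linarith
    qed
    define m where "m = min (delta K) (g3 * ds)"
    have m0: "m > 0" using dpos[of K] gs ds0 by (simp add: m_def)
    have dlow: "delta (K + n) \<ge> m" for n
    proof (induction n)
      case 0 then show ?case by (simp add: m_def)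
    next
      case (Suc n)
      show ?case
      proof (cases "delta (K + n) \<le> ds")
        case True
        hence "rt (K + n) \<ge> beta1" by (intro big) auto
        hence "delta (Suc (K + n)) = g1 * delta (K + n)" using radius[of "K + n"] by (simp add: rt_def)
        moreover have "delta (K + n) \<le> g1 * delta (K + n)" using gs dpos[of "K + n"] by simp
        ultimately show ?thesis using Suc by simp
      next
        case False
        have "g3 * ds \<le> g3 * delta (K + n)" using False gs by simp
        moreover have "m \<le> g3 * ds" by (simp add: m_def)
        ultimately show ?thesis using gd[OF dpos[of "K + n"]] by simp
      qed
    qed
    have dlow': "delta k \<ge> m" if "k \<ge> K" for k
      using dlow[of "k - K"] that by simp
    have accs: "\<exists>j\<ge>k. rt j \<ge> beta0" if kK: "k \<ge> K" for k
    proof (rule ccontr)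
      assume "\<not> (\<exists>j\<ge>k. rt j \<ge> beta0)"
      hence rej: "\<And>j. j \<ge> k \<Longrightarrow> rt j < beta0" by auto
      have dg: "delta (k + n) = g3^n * delta k" for n
      proof (induction n)
        case 0 then show ?case by simp
      next
        case (Suc n)
        have "rt (k + n) < beta0" by (rule rej) simp
        hence "delta (Suc (k + n)) = g3 * delta (k + n)"
          using radius[of "k + n"] betas by (simp add: rt_def)
        thus ?case using Suc by simp
      qed
      obtain n where n: "g3^n < m / delta k"
        using real_arch_pow_inv[of "m / delta k" g3] m0 dpos[of k] gs by auto
      hence "g3^n * delta k < m" using dpos[of k] by (simp add: less_divide_eq)
      thus False using dlow'[of "k + n"] kK dg[of n] by simp
    qed
    define c where "c = beta0 * (min 1 (m * (1 - gam)) * (\<epsilon> / 2))"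
    have c0: "c > 0" using betas m0 glt eps by (simp add: c_def)
    have accinc: "et (Suc j) \<ge> et j + c" if "rt j \<ge> beta0" "j \<ge> K" for j
    proof -
      have "min 1 (m * (1 - gam)) * (\<epsilon> / 2) \<le> min 1 (delta j * (1 - gam)) * (A j / 2)"
      proof (rule mult_mono)
        show "min 1 (m * (1 - gam)) \<le> min 1 (delta j * (1 - gam))"
        proof (rule min.mono)
          show "m * (1 - gam) \<le> delta j * (1 - gam)" using dlow'[OF that(2)] glt by (intro mult_right_mono) auto
        qed simp
        show "\<epsilon> / 2 \<le> A j / 2" using AK[OF that(2)] by simp
      qed (use glt dpos[of j] eps in auto)
      hence "c \<le> beta0 * den j"
        unfolding c_def using den_lb[of j] betas by (meson mult_left_mono less_imp_le order_trans)
      thus ?thesis using acc_inc[OF that(1)] by linarith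
    qed
    have grow: "\<exists>k\<ge>K. et k \<ge> et K + real n * c" for n
    proof (induction n)
      case 0 then show ?case by auto
    next
      case (Suc n)
      then obtain k where k: "k \<ge> K" "et k \<ge> et K + real n * c" by auto
      obtain j where j: "j \<ge> k" "rt j \<ge> beta0" using accs[OF k(1)] by auto
      have "et j \<ge> et k" using incseqD[OF inc j(1)] .
      moreover have "et (Suc j) \<ge> et j + c" using accinc[OF j(2)] j(1) k(1) by simp
      ultimately have "et (Suc j) \<ge> et K + real (Suc n) * c" using k(2) by (simp add: algebra_simps)
      moreover have "Suc j \<ge> K" using j k by simp
      ultimately show ?case by blast
    qed
    obtain n where n: "2 * Rmax / (1 - gam) < real n * c" using ex_less_of_nat_mult[OF c0] by blast
    obtain k where "et k \<ge> et K + real n * c" using grow[of n] by blast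
    thus False using bnd[of k] bnd[of K] n by (simp add: abs_le_iff)
  qed
  have part1: "liminf (\<lambda>k. ereal (A k)) = 0"
  proof (rule antisym)
    show "0 \<le> liminf (\<lambda>k. ereal (A k))"
      by (rule Liminf_bounded) (use Apos in \<open>auto simp: A_def less_imp_le\<close>)
    show "liminf (\<lambda>k. ereal (A k)) \<le> 0"
    proof (rule ccontr)
      assume "\<not> ?thesis"
      hence "0 < liminf (\<lambda>k. ereal (A k))" by simp
      then obtain y where y: "0 < ereal y" "ereal y < liminf (\<lambda>k. ereal (A k))"
        using ereal_dense2 by blast
      have "eventually (\<lambda>k. ereal (A k) > ereal y) sequentially" by (rule less_LiminfD[OF y(2)])
      then obtain K where "\<And>k. k \<ge> K \<Longrightarrow> y < A k" by (auto simp: eventually_sequentially)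
      hence "\<exists>\<epsilon>>0. \<exists>K. \<forall>k\<ge>K. \<epsilon> \<le> A k" using y(1) by (auto intro!: exI[of _ y] exI[of _ K] less_imp_le)
      thus False using nonconv by blast
    qed
  qed
  have part2: "(\<lambda>k. et k) \<longlonglongrightarrow> eta P r gam rho0 pistar"
    if ps: "is_policy pistar" and opt: "\<forall>p. is_policy p \<longrightarrow> eta P r gam rho0 p \<le> eta P r gam rho0 pistar" for pistar
  proof -
    let ?E = "eta P r gam rho0 pistar"
    have bdd: "bdd_above (range et)" using bnd by (auto intro!: bdd_aboveI[of _ "Rmax / (1 - gam)"] simp: abs_le_iff)
    have lim: "et \<longlonglongrightarrow> (SUP i. et i)" by (rule LIMSEQ_incseq_SUP[OF bdd inc])
    have le: "et k \<le> ?E" for k using opt polp by (simp add: et_def)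
    have L1: "(SUP i. et i) \<le> ?E" by (rule cSUP_least) (auto simp: le)
    have L2: "?E \<le> (SUP i. et i)"
    proof (rule ccontr)
      assume "\<not> ?thesis"
      hence gap: "(SUP i. et i) < ?E" by simp
      define cc where "cc = (1 - gam) * rmin"
      have cc0: "cc > 0" using glt rmin_pos by (simp add: cc_def)
      define \<epsilon> where "\<epsilon> = (?E - (SUP i. et i)) * cc"
      have eps0: "\<epsilon> > 0" using gap cc0 by (simp add: \<epsilon>_def)
      obtain k where k: "A k < \<epsilon>" using nonconv eps0 by (meson not_le le0)
      have "?E - et k \<le> A k / cc" using subopt[OF polp ps, of k] by (simp add: et_def A_def cc_def)
      also have "\<dots> < \<epsilon> / cc" using k cc0 by (simp add: divide_strict_right_mono)
      also have "\<dots> = ?E - (SUP i. et i)" using cc0 by (simp add: \<epsilon>_def)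
      finally have "(SUP i. et i) < et k" by simp
      moreover have "et k \<le> (SUP i. et i)" by (rule cSUP_upper[OF _ bdd]) simp
      ultimately show False by simp
    qed
    have "(SUP i. et i) = ?E" using L1 L2 by (rule antisym)
    thus ?thesis using lim by simp
  qed
  show ?thesis using part1 part2 unfolding A_def et_def by blast
qed
end


theorem mainTheorem4:
  fixes P :: "'s::finite \<Rightarrow> 'a::finite \<Rightarrow> 's \<Rightarrow> real"
    and r :: "'s \<Rightarrow> 'a \<Rightarrow> real"
    and rho0 :: "'s \<Rightarrow> real"
    and gam :: real
    and beta0 beta1 g1 g2 g3 :: real
    and pol pt :: "nat \<Rightarrow> 's \<Rightarrow> 'a \<Rightarrow> real"
    and delta :: "nat \<Rightarrow> real"
  assumes trans: "\<And>s a. is_stoch (P s a)"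
    and init: "is_stoch rho0" and init_pos: "\<And>s. rho0 s > 0"
    and disc: "0 < gam" "gam < 1"
    and betas: "0 < beta0" "beta0 < beta1" "beta1 < 1"
    and gs: "0 < g3" "g3 < g2" "g2 \<le> 1" "1 < g1"
    and pol0: "is_policy (pol 0)"
    and delta0: "delta 0 > 0"
    and subprob: "\<And>k. tr_optimal P r gam rho0 (pol k) (delta k) (pt (Suc k))"
    and accept: "\<And>k. pol (Suc k) =
        (if tr_ratio P r gam rho0 (pol k) (pt (Suc k)) \<ge> beta0 then pt (Suc k) else pol k)"
    and radius: "\<And>k. delta (Suc k) =
        (if tr_ratio P r gam rho0 (pol k) (pt (Suc k)) \<ge> beta1 then g1 * delta k
         else if tr_ratio P r gam rho0 (pol k) (pt (Suc k)) \<ge> beta0 then g2 * delta k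
         else g3 * delta k)"
    and Apos: "\<And>k. Astar P r gam rho0 (pol k) > 0"
  shows "liminf (\<lambda>k. ereal (Astar P r gam rho0 (pol k))) = 0 \<and>
         (\<forall>pistar. is_policy pistar \<and>
            (\<forall>p. is_policy p \<longrightarrow> eta P r gam rho0 p \<le> eta P r gam rho0 pistar) \<longrightarrow>
            (\<lambda>k. eta P r gam rho0 (pol k)) \<longlonglongrightarrow> eta P r gam rho0 pistar)"
  proof -
  interpret mdp P r rho0 gam
    by unfold_locales (use trans init init_pos disc in auto)
  show ?thesis
    by (rule tr_main[OF betas gs pol0 delta0 subprob accept radius Apos])
qed

end
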